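(* Let $X$ be an infinite-dimensional complex Banach space and let $A,B\in\mathcal{B}(X)$. The following are equivalent: (i) $K(AT+TA)=K(BT+TB)$ for every $T\in\mathcal{B}(X)$. (ii) $K(AF+FA)=K(BF+FB)$ for every $F\in\mathcal{F}_1(X)$. (iii) $B=\lambda A$ for some nonzero scalar $\lambda\in\mathbb{C}$.
   Context: $\mathcal{B}(X)$ denotes the algebra of all bounded linear operators on $X$, and $\mathcal{F}_1(X)$ the set of all operators in $\mathcal{B}(X)$ of rank at most one (i.e. operators $x\otimes f: z\mapsto f(z)x$ with $x\in X$, $f\in X^*$). For $T\in\mathcal{B}(X)$, the analytic core $K(T)$ is the set of all $x\in X$ for which there exist $\delta>0$ and a sequence $(x_n)_{n\ge 0}\subset X$ with $x_0=x$, $Tx_{n+1}=x_n$ and $\|x_n\|\le \delta^n\|x\|$ for all $n\ge 0$. *)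

theory Defs
  imports "HOL-Analysis.Analysis"
begin

class complex_banach = banach +
  fixes scaleC :: "complex \<Rightarrow> 'a \<Rightarrow> 'a" (infixr \<open>*\<^sub>C\<close> 75)
  assumes scaleC_add_right: "scaleC a (x + y) = scaleC a x + scaleC a y"
    and scaleC_add_left: "scaleC (a + b) x = scaleC a x + scaleC b x"
    and scaleC_scaleC: "scaleC a (scaleC b x) = scaleC (a * b) x"
    and scaleC_one: "scaleC 1 x = x"
    and scaleR_scaleC: "scaleR r x = scaleC (complex_of_real r) x"
    and norm_scaleC: "norm (scaleC a x) = cmod a * norm x"

definition infinite_dimensional_C :: "'a::complex_banach itself \<Rightarrow> bool" where
  "infinite_dimensional_C _ \<longleftrightarrow>
     (\<forall>S :: 'a set. finite S \<longrightarrow> module.span scaleC S \<noteq> UNIV)"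

definition bounded_clinear_op :: "('a::complex_banach \<Rightarrow> 'a) \<Rightarrow> bool" where
  "bounded_clinear_op T \<longleftrightarrow> bounded_linear T \<and> (\<forall>c x. T (c *\<^sub>C x) = c *\<^sub>C T x)"

definition bounded_cfunctional :: "('a::complex_banach \<Rightarrow> complex) \<Rightarrow> bool" where
  "bounded_cfunctional f \<longleftrightarrow> bounded_linear f \<and> (\<forall>c x. f (c *\<^sub>C x) = c * f x)"

definition rank_le_one_ops :: "('a::complex_banach \<Rightarrow> 'a) set" where
  "rank_le_one_ops = {(\<lambda>z. f z *\<^sub>C x) | x f. bounded_cfunctional f}"

definition analytic_core :: "('a::complex_banach \<Rightarrow> 'a) \<Rightarrow> 'a set" where
  "analytic_core T = {x. \<exists>\<delta>>0. \<exists>xs :: nat \<Rightarrow> 'a. xs 0 = x \<and>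
      (\<forall>n. T (xs (Suc n)) = xs n) \<and> (\<forall>n. norm (xs n) \<le> \<delta> ^ n * norm x)}"

end

theory Submission
  imports Defs
begin

lemma real_HB:
  fixes z :: "'a::real_normed_vector"
  shows "\<exists>F. linear F \<and> F z = norm z \<and> (\<forall>x. F x \<le> norm x)"
proof -
  define good where "good G \<longleftrightarrow> subspace G \<and> (\<forall>a. (0,a) \<in> G \<longrightarrow> a = 0)
      \<and> (\<forall>p\<in>G. snd p \<le> norm (fst p)) \<and> (z, norm z) \<in> G" for G :: "('a \<times> real) set"
  define G0 where "G0 = range (\<lambda>t. (t *\<^sub>R z, t * norm z))"
  have g0: "good G0"
  proof -
    have "subspace G0" unfolding subspace_def G0_def
    proof (intro conjI ballI allI)
      show "0 \<in> range (\<lambda>t. (t *\<^sub>R z, t * norm z))" by (rule range_eqI[of _ _ 0]) (simp add: zero_prod_def)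
    next
      fix x y assume "x \<in> range (\<lambda>t. (t *\<^sub>R z, t * norm z))" "y \<in> range (\<lambda>t. (t *\<^sub>R z, t * norm z))"
      then obtain s t where "x = (s *\<^sub>R z, s * norm z)" "y = (t *\<^sub>R z, t * norm z)" by auto
      then show "x + y \<in> range (\<lambda>t. (t *\<^sub>R z, t * norm z))"
        by (intro range_eqI[of _ _ "s + t"]) (simp add: scaleR_add_left distrib_right)
    next
      fix c x assume "x \<in> range (\<lambda>t. (t *\<^sub>R z, t * norm z))"
      then obtain s where "x = (s *\<^sub>R z, s * norm z)" by auto
      then show "c *\<^sub>R x \<in> range (\<lambda>t. (t *\<^sub>R z, t * norm z))"
        by (intro range_eqI[of _ _ "c * s"]) simp
    qed
    moreover have "\<forall>a. (0,a) \<in> G0 \<longrightarrow> a = 0" unfolding G0_def by auto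
    moreover have "\<forall>p\<in>G0. snd p \<le> norm (fst p)" unfolding G0_def
      by (auto simp: abs_mult intro: mult_right_mono)
    moreover have "(z, norm z) \<in> G0" unfolding G0_def by (rule range_eqI[of _ _ 1]) simp
    ultimately show ?thesis unfolding good_def by blast
  qed
  have "\<exists>M\<in>{G. good G}. \<forall>X\<in>{G. good G}. M \<subseteq> X \<longrightarrow> X = M"
  proof (rule Zorn_Lemma2, intro ballI)
    fix C assume C: "C \<in> chains {G. good G}"
    show "\<exists>U\<in>{G. good G}. \<forall>X\<in>C. X \<subseteq> U"
    proof (cases "C = {}")
      case True then show ?thesis using g0 by blast
    next
      case False
      have Cg: "\<And>G. G \<in> C \<Longrightarrow> good G" using C unfolding chains_def by auto
      have ch: "\<And>G H. G \<in> C \<Longrightarrow> H \<in> C \<Longrightarrow> G \<subseteq> H \<or> H \<subseteq> G"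
        using C unfolding chains_def chain_subset_def by auto
      have "subspace (\<Union>C)" unfolding subspace_def
      proof (intro conjI ballI allI)
        obtain G where "G \<in> C" using False by auto
        then show "0 \<in> \<Union>C" using Cg[of G] unfolding good_def subspace_def by auto
      next
        fix x y assume "x \<in> \<Union>C" "y \<in> \<Union>C"
        then obtain G H where GH: "G \<in> C" "H \<in> C" "x \<in> G" "y \<in> H" by auto
        show "x + y \<in> \<Union>C"
        proof (cases "G \<subseteq> H")
          case True then show ?thesis using GH Cg[of H] unfolding good_def subspace_def by blast
        next
          case False then have "H \<subseteq> G" using ch GH by blast
          then show ?thesis using GH Cg[of G] unfolding good_def subspace_def by blast
        qed
      next
        fix c x assume "x \<in> \<Union>C"
        then obtain G where "G \<in> C" "x \<in> G" by auto
        then show "c *\<^sub>R x \<in> \<Union>C" using Cg[of G] unfolding good_def subspace_def by blast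
      qed
      moreover have "good (\<Union>C)"
        using calculation Cg False unfolding good_def by blast
      then show ?thesis by blast
    qed
  qed
  then obtain M where gM: "good M" and maxM: "\<And>X. good X \<Longrightarrow> M \<subseteq> X \<Longrightarrow> X = M" by blast
  have sM: "subspace M" and fM: "\<And>a. (0,a) \<in> M \<Longrightarrow> a = 0"
    and bM: "\<And>y b. (y,b) \<in> M \<Longrightarrow> b \<le> norm y" and zM: "(z, norm z) \<in> M"
    using gM unfolding good_def by auto
  have addM: "\<And>p q. p \<in> M \<Longrightarrow> q \<in> M \<Longrightarrow> p + q \<in> M" using sM by (simp add: subspace_add)
  have scM: "\<And>c p. p \<in> M \<Longrightarrow> c *\<^sub>R p \<in> M" using sM by (simp add: subspace_scale)
  have uniq: "\<And>x a b. (x,a) \<in> M \<Longrightarrow> (x,b) \<in> M \<Longrightarrow> a = b"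
  proof -
    fix x a b assume "(x,a) \<in> M" "(x,b) \<in> M"
    then have "(x,a) + (-1) *\<^sub>R (x,b) \<in> M" using addM scM by blast
    then have "(0, a - b) \<in> M" by simp
    then show "a = b" using fM by force
  qed
  have total: "\<forall>x0. \<exists>a. (x0,a) \<in> M"
  proof (rule ccontr)
    assume "\<not> (\<forall>x0. \<exists>a. (x0,a) \<in> M)"
    then obtain x0 where x0: "\<And>a. (x0,a) \<notin> M" by blast
    define S where "S = {b - norm (y - x0) | y b. (y,b) \<in> M}"
    define c where "c = Sup S"
    have key: "b - norm (y - x0) \<le> norm (w + x0) - e" if "(y,b) \<in> M" "(w,e) \<in> M" for y b w e
    proof -
      have "(y,b) + (w,e) \<in> M" using that addM by blast
      then have "b + e \<le> norm (y + w)" using bM by simp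
      also have "y + w = (y - x0) + (w + x0)" by simp
      also have "norm \<dots> \<le> norm (y - x0) + norm (w + x0)" by (rule norm_triangle_ineq)
      finally show ?thesis by simp
    qed
    have zero: "(0,0) \<in> M" using sM subspace_0 by (metis zero_prod_def)
    have Sne: "S \<noteq> {}" using zero unfolding S_def by blast
    have Sbd: "bdd_above S" unfolding S_def bdd_above_def
      using key[OF _ zero] by auto
    have c_le: "c \<le> norm (w + x0) - e" if "(w,e) \<in> M" for w e
      unfolding c_def using key[OF _ that] Sne by (intro cSup_least) (auto simp: S_def)
    have le_c: "b - norm (y - x0) \<le> c" if "(y,b) \<in> M" for y b
      unfolding c_def using that Sbd by (intro cSup_upper) (auto simp: S_def)
    define M' where "M' = {(y + t *\<^sub>R x0, b + t * c) | y b t. (y,b) \<in> M}"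
    have MM': "M \<subseteq> M'" unfolding M'_def by force
    have new: "(x0, c) \<in> M'" unfolding M'_def using zero by force
    have "good M'"
    proof -
      have "subspace M'" unfolding subspace_def
      proof (intro conjI ballI allI)
        show "0 \<in> M'" using MM' zero by (auto simp: zero_prod_def)
      next
        fix p q assume "p \<in> M'" "q \<in> M'"
        then obtain y b t w e s where p: "p = (y + t *\<^sub>R x0, b + t * c)" "(y,b) \<in> M"
          and q: "q = (w + s *\<^sub>R x0, e + s * c)" "(w,e) \<in> M" unfolding M'_def by blast
        have "(y,b) + (w,e) \<in> M" using p q addM by blast
        then have "(y + w, b + e) \<in> M" by simp
        moreover have "p + q = ((y + w) + (t + s) *\<^sub>R x0, (b + e) + (t + s) * c)"
          using p q by (simp add: algebra_simps)
        ultimately show "p + q \<in> M'" unfolding M'_def by blast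
      next
        fix r p assume "p \<in> M'"
        then obtain y b t where p: "p = (y + t *\<^sub>R x0, b + t * c)" "(y,b) \<in> M"
          unfolding M'_def by blast
        have "r *\<^sub>R (y,b) \<in> M" using p scM by blast
        then have "(r *\<^sub>R y, r * b) \<in> M" by simp
        moreover have "r *\<^sub>R p = (r *\<^sub>R y + (r * t) *\<^sub>R x0, r * b + (r * t) * c)"
          using p by (simp add: algebra_simps)
        ultimately show "r *\<^sub>R p \<in> M'" unfolding M'_def by blast
      qed
      moreover have "\<forall>a. (0,a) \<in> M' \<longrightarrow> a = 0"
      proof (intro allI impI)
        fix a assume "(0,a) \<in> M'"
        then obtain y b t where yb: "(y,b) \<in> M" "0 = y + t *\<^sub>R x0" "a = b + t * c"
          unfolding M'_def by blast
        show "a = 0"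
        proof (cases "t = 0")
          case True then show ?thesis using yb fM by simp
        next
          case False
          have "(-1/t) *\<^sub>R (y,b) \<in> M" using yb scM by blast
          moreover have "(-1/t) *\<^sub>R y = x0"
          proof -
            have "y = - (t *\<^sub>R x0)" using yb(2) by (simp add: eq_neg_iff_add_eq_0)
            then show ?thesis using False by simp
          qed
          ultimately have "(x0, (-1/t) * b) \<in> M" by simp
          then show ?thesis using x0 by blast
        qed
      qed
      moreover have "\<forall>p\<in>M'. snd p \<le> norm (fst p)"
      proof
        fix p assume "p \<in> M'"
        then obtain y b t where p: "p = (y + t *\<^sub>R x0, b + t * c)" "(y,b) \<in> M"
          unfolding M'_def by blast
        have "b + t * c \<le> norm (y + t *\<^sub>R x0)"
        proof (cases t "0::real" rule: linorder_cases)
          case equal then show ?thesis using bM p by simp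
        next
          case greater
          have "((1/t) *\<^sub>R y, (1/t) * b) \<in> M" using scM[OF p(2), of "1/t"] by simp
          from c_le[OF this] have "c \<le> norm ((1/t) *\<^sub>R y + x0) - (1/t) * b" .
          then have "t * c \<le> t * norm ((1/t) *\<^sub>R y + x0) - b"
            using greater by (simp add: field_simps)
          also have "t * norm ((1/t) *\<^sub>R y + x0) = norm (t *\<^sub>R ((1/t) *\<^sub>R y + x0))"
            using greater by simp
          also have "t *\<^sub>R ((1/t) *\<^sub>R y + x0) = y + t *\<^sub>R x0"
            using greater by (simp add: scaleR_add_right)
          finally show ?thesis by simp
        next
          case less
          define s where "s = -t"
          have s: "s > 0" using less s_def by simp
          have "((1/s) *\<^sub>R y, (1/s) * b) \<in> M" using scM[OF p(2), of "1/s"] by simp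
          from le_c[OF this] have "(1/s) * b - norm ((1/s) *\<^sub>R y - x0) \<le> c" .
          then have "b - s * norm ((1/s) *\<^sub>R y - x0) \<le> s * c"
            using s by (simp add: field_simps)
          also have "s * norm ((1/s) *\<^sub>R y - x0) = norm (s *\<^sub>R ((1/s) *\<^sub>R y - x0))"
            using s by simp
          also have "s *\<^sub>R ((1/s) *\<^sub>R y - x0) = y + t *\<^sub>R x0"
            using s by (simp add: scaleR_diff_right s_def)
          finally show ?thesis using s_def by simp
        qed
        then show "snd p \<le> norm (fst p)" using p by simp
      qed
      moreover have "(z, norm z) \<in> M'" using MM' zM by blast
      ultimately show ?thesis unfolding good_def by blast
    qed
    then have "M' = M" using maxM MM' by blast
    then show False using new x0 by blast
  qed
  define F where "F x = (SOME a. (x,a) \<in> M)" for x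
  have FM: "(x, F x) \<in> M" for x unfolding F_def using total by (metis someI_ex)
  have Feq: "(x,a) \<in> M \<Longrightarrow> F x = a" for x a using uniq FM by blast
  have "linear F"
  proof (rule linearI)
    fix x y
    have "(x, F x) + (y, F y) \<in> M" using FM addM by blast
    then show "F (x + y) = F x + F y" using Feq by simp
  next
    fix r x
    have "r *\<^sub>R (x, F x) \<in> M" using FM scM by blast
    then show "F (r *\<^sub>R x) = r *\<^sub>R F x" using Feq by simp
  qed
  moreover have "F z = norm z" using Feq zM by blast
  moreover have "\<forall>x. F x \<le> norm x" using FM bM by blast
  ultimately show ?thesis by blast
qed


interpretation C: module "scaleC :: complex \<Rightarrow> 'a::complex_banach \<Rightarrow> 'a"
  by unfold_locales (simp_all add: scaleC_add_right scaleC_add_left scaleC_scaleC scaleC_one)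

lemma scaleC_ii_ii: "\<i> *\<^sub>C (\<i> *\<^sub>C (x::'a::complex_banach)) = - x"
  by (simp add: scaleC_scaleC)

lemma scaleC_decomp: "c *\<^sub>C (x::'a::complex_banach) = Re c *\<^sub>R x + Im c *\<^sub>R (\<i> *\<^sub>C x)"
proof -
  have "Re c *\<^sub>R x + Im c *\<^sub>R (\<i> *\<^sub>C x) = (complex_of_real (Re c) + complex_of_real (Im c) * \<i>) *\<^sub>C x"
    by (simp add: scaleR_scaleC scaleC_scaleC scaleC_add_left)
  also have "complex_of_real (Re c) + complex_of_real (Im c) * \<i> = c" by (simp add: complex_eq_iff)
  finally show ?thesis by simp
qed

lemma bcf_comb:
  assumes "bounded_cfunctional g" "bounded_cfunctional h"
  shows "bounded_cfunctional (\<lambda>x. g x - a * (h x - b * g x))"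
proof -
  interpret g: bounded_linear g using assms unfolding bounded_cfunctional_def by simp
  interpret h: bounded_linear h using assms unfolding bounded_cfunctional_def by simp
  have "bounded_linear (\<lambda>x. g x - a * (h x - b * g x))"
    by (intro bounded_linear_intros g.bounded_linear_axioms h.bounded_linear_axioms
           bounded_linear_const_mult)
  moreover have "\<forall>c x. g (c *\<^sub>C x) - a * (h (c *\<^sub>C x) - b * g (c *\<^sub>C x)) = c * (g x - a * (h x - b * g x))"
    using assms unfolding bounded_cfunctional_def by (simp add: algebra_simps)
  ultimately show ?thesis unfolding bounded_cfunctional_def by simp
qed

lemma sep0:
  fixes z :: "'a::complex_banach"
  assumes "z \<noteq> 0"
  shows "\<exists>f. bounded_cfunctional f \<and> f z = 1"
proof -
  obtain F where F: "linear F" "F z = norm z" "\<And>x. F x \<le> norm x" using real_HB[of z] by blast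
  interpret F: linear F by (rule F(1))
  have absF: "\<bar>F x\<bar> \<le> norm x" for x
    using F(3)[of x] F(3)[of "-x"] F.neg[of x] by simp
  define g where "g x = complex_of_real (F x) - \<i> * complex_of_real (F (\<i> *\<^sub>C x))" for x
  have gadd: "g (x + y) = g x + g y" for x y
    unfolding g_def by (simp add: scaleC_add_right F.add algebra_simps)
  have gR: "g (r *\<^sub>R x) = r *\<^sub>R g x" for r x
  proof -
    have "\<i> *\<^sub>C (r *\<^sub>R x) = r *\<^sub>R (\<i> *\<^sub>C x)"
      by (simp add: scaleR_scaleC scaleC_scaleC mult.commute)
    then show ?thesis unfolding g_def by (simp add: F.scale scaleR_conv_of_real algebra_simps)
  qed
  have gi: "g (\<i> *\<^sub>C x) = \<i> * g x" for x
    unfolding g_def scaleC_ii_ii by (simp add: F.neg algebra_simps)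
  have gC: "g (c *\<^sub>C x) = c * g x" for c x
  proof -
    have "g (c *\<^sub>C x) = Re c *\<^sub>R g x + Im c *\<^sub>R (\<i> * g x)"
      by (simp add: scaleC_decomp[of c x] gadd gR gi)
    also have "\<dots> = (complex_of_real (Re c) + complex_of_real (Im c) * \<i>) * g x"
      by (simp add: scaleR_conv_of_real algebra_simps)
    also have "complex_of_real (Re c) + complex_of_real (Im c) * \<i> = c" by (simp add: complex_eq_iff)
    finally show ?thesis .
  qed
  have gb: "norm (g x) \<le> norm x * 2" for x
  proof -
    have "norm (g x) \<le> norm (complex_of_real (F x)) + norm (\<i> * complex_of_real (F (\<i> *\<^sub>C x)))"
      unfolding g_def by (rule norm_triangle_ineq4)
    also have "\<dots> = \<bar>F x\<bar> + \<bar>F (\<i> *\<^sub>C x)\<bar>" by (simp add: norm_mult)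
    also have "\<dots> \<le> norm x + norm (\<i> *\<^sub>C x)" using absF by (intro add_mono) auto
    also have "norm (\<i> *\<^sub>C x) = norm x" by (simp add: norm_scaleC)
    finally show ?thesis by simp
  qed
  have bg: "bounded_linear g"
    by (rule bounded_linear_intro[of g, OF gadd gR gb])
  have gz: "g z \<noteq> 0"
  proof
    assume "g z = 0"
    then have "Re (g z) = 0" by simp
    then have "F z = 0" unfolding g_def by simp
    then show False using F(2) assms by simp
  qed
  define f where "f x = g x / g z" for x
  have "bounded_linear f" unfolding f_def
    by (rule bounded_linear_compose[OF bounded_linear_divide[of "g z"] bg])
  moreover have "\<forall>c x. f (c *\<^sub>C x) = c * f x" unfolding f_def by (simp add: gC)
  moreover have "f z = 1" unfolding f_def using gz by simp
  ultimately show ?thesis unfolding bounded_cfunctional_def by blast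
qed

lemma bcf_lin:
  assumes "bounded_cfunctional f"
  shows "f (x + y) = f x + f y" "f (x - y) = f x - f y" "f 0 = 0" "f (c *\<^sub>C x) = c * f x"
  using assms unfolding bounded_cfunctional_def
  by (auto simp: linear_simps)

lemma sep1:
  fixes z u :: "'a::complex_banach"
  assumes "\<not> (\<exists>a. z = a *\<^sub>C u)"
  shows "\<exists>f. bounded_cfunctional f \<and> f z = 1 \<and> f u = 0"
proof -
  have "z \<noteq> 0" using assms[unfolded not_ex, rule_format, of 0] by simp
  then obtain g where g: "bounded_cfunctional g" "g z = 1" using sep0 by blast
  show ?thesis
  proof (cases "g u = 0")
    case True then show ?thesis using g by blast
  next
    case False
    define w where "w = u - g u *\<^sub>C z"
    have "w \<noteq> 0"
    proof
      assume "w = 0"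
      then have "u = g u *\<^sub>C z" unfolding w_def by simp
      then have "(1 / g u) *\<^sub>C u = ((1 / g u) * g u) *\<^sub>C z" by (metis scaleC_scaleC)
      then have "(1 / g u) *\<^sub>C u = z" using False by (simp add: scaleC_one)
      then show False using assms by metis
    qed
    then obtain h where h: "bounded_cfunctional h" "h w = 1" using sep0 by blast
    have hu: "h u = 1 + g u * h z"
      using h bcf_lin[OF h(1)] unfolding w_def by (simp add: algebra_simps)
    let ?f = "\<lambda>x. g x - g u * (h x - h z * g x)"
    have "bounded_cfunctional ?f" by (rule bcf_comb[OF g(1) h(1)])
    moreover have "?f z = 1" using g by simp
    moreover have "?f u = 0" using hu by (simp add: algebra_simps)
    ultimately show ?thesis by blast
  qed
qed

lemma sep2:
  fixes z u v :: "'a::complex_banach"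
  assumes "\<not> (\<exists>a b. z = a *\<^sub>C u + b *\<^sub>C v)"
  shows "\<exists>f. bounded_cfunctional f \<and> f z = 1 \<and> f u = 0 \<and> f v = 0"
proof -
  have "\<not> (\<exists>a. z = a *\<^sub>C u)"
  proof
    assume "\<exists>a. z = a *\<^sub>C u"
    then obtain a where "z = a *\<^sub>C u + 0 *\<^sub>C v" by auto
    then show False using assms by blast
  qed
  then obtain g where g: "bounded_cfunctional g" "g z = 1" "g u = 0" using sep1 by blast
  show ?thesis
  proof (cases "g v = 0")
    case True then show ?thesis using g by blast
  next
    case False
    define w where "w = v - g v *\<^sub>C z"
    have "\<not> (\<exists>a. w = a *\<^sub>C u)"
    proof
      assume "\<exists>a. w = a *\<^sub>C u"
      then obtain a where "v - g v *\<^sub>C z = a *\<^sub>C u" unfolding w_def by blast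
      then have "g v *\<^sub>C z = v - a *\<^sub>C u" by (simp add: algebra_simps)
      then have "(1 / g v) *\<^sub>C (g v *\<^sub>C z) = (1 / g v) *\<^sub>C (v - a *\<^sub>C u)" by simp
      then have "z = (- a / g v) *\<^sub>C u + (1 / g v) *\<^sub>C v"
        using False by (simp add: scaleC_scaleC C.scale_right_diff_distrib algebra_simps)
      then show False using assms by blast
    qed
    then obtain h where h: "bounded_cfunctional h" "h w = 1" "h u = 0" using sep1 by blast
    have hv: "h v = 1 + g v * h z"
      using h bcf_lin[OF h(1)] unfolding w_def by (simp add: algebra_simps)
    let ?f = "\<lambda>x. g x - g v * (h x - h z * g x)"
    have "bounded_cfunctional ?f" by (rule bcf_comb[OF g(1) h(1)])
    moreover have "?f z = 1" using g by simp
    moreover have "?f u = 0" using g h by simp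
    moreover have "?f v = 0" using hv by (simp add: algebra_simps)
    ultimately show ?thesis by blast
  qed
qed


lemma K_nil:
  assumes "\<And>z. S (S (S z)) = 0"
  shows "analytic_core S \<subseteq> {0}"
proof
  fix x assume "x \<in> analytic_core S"
  then obtain xs where xs: "xs 0 = x" "\<And>n. S (xs (Suc n)) = xs n"
    unfolding analytic_core_def by blast
  have "x = S (S (S (xs 3)))" using xs by (simp add: numeral_3_eq_3)
  then show "x \<in> {0}" using assms by simp
qed

lemma K_range2:
  assumes "x \<in> analytic_core S"
  shows "\<exists>w. x = S (S w)"
proof -
  obtain xs where xs: "xs 0 = x" "\<And>n. S (xs (Suc n)) = xs n"
    using assms unfolding analytic_core_def by blast
  have "x = S (S (xs 2))" using xs by (simp add: numeral_2_eq_2)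
  then show ?thesis by blast
qed

lemma K_eig:
  fixes S :: "'a::complex_banach \<Rightarrow> 'a"
  assumes lin: "\<And>a z. S (a *\<^sub>C z) = a *\<^sub>C S z" and ey: "S y = \<mu> *\<^sub>C y" and mu: "\<mu> \<noteq> 0"
  shows "y \<in> analytic_core S"
proof -
  define xs where "xs n = (1/\<mu>)^n *\<^sub>C y" for n
  have "xs 0 = y" unfolding xs_def by (simp add: scaleC_one)
  moreover have "S (xs (Suc n)) = xs n" for n
  proof -
    have "S (xs (Suc n)) = ((1/\<mu>)^Suc n * \<mu>) *\<^sub>C y" unfolding xs_def by (simp add: lin ey scaleC_scaleC)
    also have "(1/\<mu>)^Suc n * \<mu> = (1/\<mu>)^n" using mu by simp
    finally show ?thesis unfolding xs_def .
  qed
  moreover have "norm (xs n) \<le> (1 / cmod \<mu>) ^ n * norm y" for n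
    unfolding xs_def by (simp add: norm_scaleC norm_power norm_divide)
  moreover have "1 / cmod \<mu> > 0" using mu by simp
  ultimately show ?thesis unfolding analytic_core_def by blast
qed

lemma K_scale:
  fixes S :: "'a::complex_banach \<Rightarrow> 'a"
  assumes lin: "\<And>a z. S (a *\<^sub>C z) = a *\<^sub>C S z" and c: "c \<noteq> 0"
  shows "analytic_core S \<subseteq> analytic_core (\<lambda>x. c *\<^sub>C S x)"
proof
  fix x assume "x \<in> analytic_core S"
  then obtain \<delta> xs where d: "\<delta> > 0" and xs: "xs 0 = x" "\<And>n. S (xs (Suc n)) = xs n"
    "\<And>n. norm (xs n) \<le> \<delta> ^ n * norm x"
    unfolding analytic_core_def by blast
  define ys where "ys n = (1/c)^n *\<^sub>C xs n" for n
  have "ys 0 = x" unfolding ys_def using xs by (simp add: scaleC_one)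
  moreover have "c *\<^sub>C S (ys (Suc n)) = ys n" for n
  proof -
    have "c *\<^sub>C S (ys (Suc n)) = (c * (1/c)^Suc n) *\<^sub>C xs n" unfolding ys_def by (simp add: lin xs scaleC_scaleC)
    also have "c * (1/c)^Suc n = (1/c)^n" using c by simp
    finally show ?thesis unfolding ys_def .
  qed
  moreover have "norm (ys n) \<le> (\<delta> / cmod c) ^ n * norm x" for n
  proof -
    have "norm (ys n) = (1 / cmod c)^n * norm (xs n)" unfolding ys_def
      by (simp add: norm_scaleC norm_power norm_divide)
    also have "\<dots> \<le> (1 / cmod c)^n * (\<delta> ^ n * norm x)" using xs(3) by (intro mult_left_mono) auto
    also have "\<dots> = (\<delta> / cmod c) ^ n * norm x" by (simp add: power_divide)
    finally show ?thesis .
  qed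
  moreover have "\<delta> / cmod c > 0" using c d by simp
  ultimately show "x \<in> analytic_core (\<lambda>x. c *\<^sub>C S x)" unfolding analytic_core_def by blast
qed

definition clin :: "('a::complex_banach \<Rightarrow> 'a) \<Rightarrow> bool" where
  "clin T \<longleftrightarrow> (\<forall>x y. T (x + y) = T x + T y) \<and> (\<forall>c x. T (c *\<^sub>C x) = c *\<^sub>C T x)"

lemma clin_simps:
  assumes "clin T"
  shows "T (x + y) = T x + T y" "T (c *\<^sub>C x) = c *\<^sub>C T x" "T 0 = 0" "T (x - y) = T x - T y"
proof -
  show a: "T (x + y) = T x + T y" "T (c *\<^sub>C x) = c *\<^sub>C T x" using assms unfolding clin_def by auto
  show "T 0 = 0" using assms unfolding clin_def by (metis C.scale_zero_left)
  have "x - y = x + (-1) *\<^sub>C y" by simp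
  then have "T (x - y) = T x + (-1) *\<^sub>C T y" using a by (metis assms clin_def)
  then show "T (x - y) = T x - T y" by simp
qed

lemma bco_clin: "bounded_clinear_op T \<Longrightarrow> clin T"
  unfolding bounded_clinear_op_def clin_def by (auto simp: linear_simps)

definition SS :: "('a::complex_banach \<Rightarrow> 'a) \<Rightarrow> ('a \<Rightarrow> complex) \<Rightarrow> 'a \<Rightarrow> 'a \<Rightarrow> 'a" where
  "SS T f y z = f z *\<^sub>C T y + f (T z) *\<^sub>C y"

lemma SS_add: "clin T \<Longrightarrow> bounded_cfunctional f \<Longrightarrow> SS T f y (u + w) = SS T f y u + SS T f y w"
  unfolding SS_def by (simp add: clin_simps bcf_lin scaleC_add_left algebra_simps)

lemma SS_scale: "clin T \<Longrightarrow> bounded_cfunctional f \<Longrightarrow> SS T f y (a *\<^sub>C u) = a *\<^sub>C SS T f y u"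
  unfolding SS_def by (simp add: clin_simps bcf_lin scaleC_add_right scaleC_scaleC)

lemma SS_zero: "clin T \<Longrightarrow> bounded_cfunctional f \<Longrightarrow> SS T f y 0 = 0"
  unfolding SS_def by (simp add: clin_simps bcf_lin)

lemma SS_comb: "clin T \<Longrightarrow> bounded_cfunctional f \<Longrightarrow>
   SS T f y (a *\<^sub>C u + b *\<^sub>C w) = a *\<^sub>C SS T f y u + b *\<^sub>C SS T f y w"
  by (simp add: SS_add SS_scale)

lemma NIL1:
  assumes T: "clin T" and f: "bounded_cfunctional f" and h: "f (T y) = 0" "f (T (T y)) = 0"
  shows "analytic_core (SS T f y) \<subseteq> {0}"
proof (rule K_nil)
  fix z
  have a: "SS T f y (T y) = 0" unfolding SS_def using h by simp
  have b: "SS T f y y = f y *\<^sub>C T y" unfolding SS_def using h by simp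
  have "SS T f y (SS T f y z) = f (T z) *\<^sub>C (f y *\<^sub>C T y)"
    unfolding SS_def[of T f y z] by (simp add: SS_comb[OF T f] a b)
  then show "SS T f y (SS T f y (SS T f y z)) = 0"
    by (simp add: SS_scale[OF T f] a)
qed

lemma NIL2:
  assumes T: "clin T" and f: "bounded_cfunctional f" and h: "f y = 0" "f (T y) = 0"
  shows "analytic_core (SS T f y) \<subseteq> {0}"
proof (rule K_nil)
  fix z
  have a: "SS T f y (T y) = f (T (T y)) *\<^sub>C y" unfolding SS_def using h by simp
  have b: "SS T f y y = 0" unfolding SS_def using h by simp
  have "SS T f y (SS T f y z) = f z *\<^sub>C (f (T (T y)) *\<^sub>C y)"
    unfolding SS_def[of T f y z] by (simp add: SS_comb[OF T f] a b)
  then show "SS T f y (SS T f y (SS T f y z)) = 0"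
    by (simp add: SS_scale[OF T f] b)
qed


lemma scaleC_eq_0D: "a *\<^sub>C (x::'a::complex_banach) = 0 \<Longrightarrow> a = 0 \<or> x = 0"
  by (metis norm_scaleC norm_eq_zero mult_eq_0_iff)

lemma scaleC_times2: "(a * 2) *\<^sub>C (x::'a::complex_banach) = a *\<^sub>C x + a *\<^sub>C x"
  "(2 * a) *\<^sub>C x = a *\<^sub>C x + a *\<^sub>C x"
  by (metis mult_2_right scaleC_add_left, metis mult_2 scaleC_add_left)

definition HH :: "('a::complex_banach \<Rightarrow> 'a) \<Rightarrow> ('a \<Rightarrow> 'a) \<Rightarrow> bool" where
  "HH A B \<longleftrightarrow> (\<forall>y f. bounded_cfunctional f \<longrightarrow> analytic_core (SS A f y) = analytic_core (SS B f y))"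

lemma L1:
  assumes A: "clin A" and B: "clin B" and H: "HH A B"
  shows "\<exists>\<alpha> \<beta>. B y = \<alpha> *\<^sub>C y + \<beta> *\<^sub>C A y"
proof (rule ccontr)
  assume n: "\<not> (\<exists>\<alpha> \<beta>. B y = \<alpha> *\<^sub>C y + \<beta> *\<^sub>C A y)"
  then obtain f where f: "bounded_cfunctional f" "f (B y) = 1" "f y = 0" "f (A y) = 0"
    using sep2 by blast
  have y: "y \<noteq> 0"
  proof
    assume "y = 0"
    then have "B y = 0 *\<^sub>C y + 0 *\<^sub>C A y" by (simp add: clin_simps[OF B])
    then show False using n by blast
  qed
  have KA: "analytic_core (SS A f y) \<subseteq> {0}" by (rule NIL2[OF A f(1) f(3) f(4)])
  have "SS B f y y = 1 *\<^sub>C y" unfolding SS_def using f by simp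
  then have "y \<in> analytic_core (SS B f y)" by (intro K_eig[of _ _ 1]) (simp_all add: SS_scale[OF B f(1)])
  then show False using KA H f(1) y unfolding HH_def by blast
qed

lemma case3:
  assumes A: "clin A" and B: "clin B" and H: "HH A B"
    and n1: "\<not> (\<exists>k. A y = k *\<^sub>C y)" and n2: "\<not> (\<exists>c1 c2. A (A y) = c1 *\<^sub>C y + c2 *\<^sub>C A y)"
  shows "\<exists>l. B y = l *\<^sub>C A y"
proof -
  have ny: "\<not> (\<exists>a b. y = a *\<^sub>C A y + b *\<^sub>C A (A y))"
  proof
    assume "\<exists>a b. y = a *\<^sub>C A y + b *\<^sub>C A (A y)"
    then obtain a b where ab: "y = a *\<^sub>C A y + b *\<^sub>C A (A y)" by blast
    show False
    proof (cases "b = 0")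
      case False
      have "b *\<^sub>C A (A y) = y - a *\<^sub>C A y" using ab by (simp add: algebra_simps)
      then have "(1/b) *\<^sub>C (b *\<^sub>C A (A y)) = (1/b) *\<^sub>C (y - a *\<^sub>C A y)" by simp
      then have "A (A y) = (1/b) *\<^sub>C y + (- a / b) *\<^sub>C A y"
        using False by (simp add: scaleC_scaleC C.scale_right_diff_distrib C.scale_minus_left)
      then show False using n2 by blast
    next
      case True
      then have ya: "y = a *\<^sub>C A y" using ab by simp
      show False
      proof (cases "a = 0")
        case True
        then have "y = 0" using ya by simp
        then have "A y = 0 *\<^sub>C y" by (simp add: clin_simps[OF A])
        then show False using n1 by blast
      next
        case False
        have "(1/a) *\<^sub>C y = (1/a) *\<^sub>C (a *\<^sub>C A y)" by (rule arg_cong[OF ya])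
        also have "\<dots> = A y" using False by (simp add: scaleC_scaleC)
        finally have "A y = (1/a) *\<^sub>C y" by simp
        then show False using n1 by blast
      qed
    qed
  qed
  obtain f where f: "bounded_cfunctional f" "f y = 1" "f (A y) = 0" "f (A (A y)) = 0"
    using sep2[OF ny] by blast
  have KA: "analytic_core (SS A f y) \<subseteq> {0}" by (rule NIL1[OF A f(1) f(3) f(4)])
  obtain \<alpha> \<beta> where ab: "B y = \<alpha> *\<^sub>C y + \<beta> *\<^sub>C A y" using L1[OF A B H] by blast
  obtain \<alpha>' \<beta>' where ab': "B (A y) = \<alpha>' *\<^sub>C A y + \<beta>' *\<^sub>C A (A y)" using L1[OF A B H, of "A y"] by blast
  have fBy: "f (B y) = \<alpha>" using f ab by (simp add: bcf_lin)
  have fBAy: "f (B (A y)) = 0" using f ab' by (simp add: bcf_lin)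
  define u where "u = (2*\<alpha>) *\<^sub>C y + \<beta> *\<^sub>C A y"
  have Sy: "SS B f y y = u" unfolding SS_def u_def using f fBy ab
    by (simp add: scaleC_one algebra_simps C.scale_left_distrib scaleC_times2)
  have SAy: "SS B f y (A y) = 0" unfolding SS_def using f fBAy by simp
  have Su: "SS B f y u = (2*\<alpha>) *\<^sub>C u"
    unfolding u_def by (simp add: SS_comb[OF B f(1)] Sy SAy, simp add: u_def)
  have "\<alpha> = 0"
  proof (rule ccontr)
    assume a: "\<alpha> \<noteq> 0"
    have "u \<in> analytic_core (SS B f y)"
      using K_eig[of "SS B f y" u "2*\<alpha>"] Su a SS_scale[OF B f(1)] by auto
    then have "u = 0" using H f(1) KA unfolding HH_def by blast
    then have "f u = 0" using f by (simp add: bcf_lin)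
    moreover have "f u = 2 * \<alpha>" unfolding u_def using f by (simp add: bcf_lin)
    ultimately show False using a by simp
  qed
  then show ?thesis using ab by auto
qed


lemma Glem:
  assumes T: "clin T" and f: "bounded_cfunctional f" and fy: "f y = 1" and fv: "f v = 0"
    and Tv: "T v = t *\<^sub>C v" and Ty: "T y = a *\<^sub>C y + c *\<^sub>C v"
  shows "(a \<noteq> 0 \<longrightarrow> (2*a) *\<^sub>C y + c *\<^sub>C v \<in> analytic_core (SS T f y))
       \<and> (a = 0 \<longrightarrow> analytic_core (SS T f y) \<subseteq> {0})
       \<and> (\<forall>x\<in>analytic_core (SS T f y). \<exists>p. x = p *\<^sub>C ((2*a) *\<^sub>C y + c *\<^sub>C v))"
proof -
  define u where "u = (2*a) *\<^sub>C y + c *\<^sub>C v"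
  have fTy: "f (T y) = a" using Ty fy fv f by (simp add: bcf_lin)
  have Sy: "SS T f y y = u" unfolding SS_def u_def using fy fTy Ty
    by (simp add: scaleC_times2 algebra_simps)
  have Sv: "SS T f y v = 0" unfolding SS_def using fv Tv f by (simp add: bcf_lin)
  have SSz: "SS T f y (SS T f y z) = (f z * a + f (T z)) *\<^sub>C u" for z
  proof -
    have "SS T f y z = (f z * a + f (T z)) *\<^sub>C y + (f z * c) *\<^sub>C v"
      unfolding SS_def Ty by (simp add: scaleC_add_right scaleC_add_left scaleC_scaleC algebra_simps)
    then show ?thesis by (simp add: SS_comb[OF T f] Sy Sv)
  qed
  have Su: "SS T f y u = (2*a) *\<^sub>C u"
    unfolding u_def by (simp add: SS_comb[OF T f] Sy Sv, simp add: u_def)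
  have p1: "a \<noteq> 0 \<longrightarrow> u \<in> analytic_core (SS T f y)"
    using K_eig[of "SS T f y" u "2*a"] Su SS_scale[OF T f] by auto
  have p2: "a = 0 \<longrightarrow> analytic_core (SS T f y) \<subseteq> {0}"
  proof
    assume a: "a = 0"
    show "analytic_core (SS T f y) \<subseteq> {0}"
    proof (rule K_nil)
      fix z show "SS T f y (SS T f y (SS T f y z)) = 0"
        using SSz[of z] Su a SS_scale[OF T f] by simp
    qed
  qed
  have p3: "\<forall>x\<in>analytic_core (SS T f y). \<exists>p. x = p *\<^sub>C u"
    using K_range2 SSz by metis
  show ?thesis using p1 p2 p3 unfolding u_def by blast
qed


lemma quad_root: "\<exists>k::complex. k * k = c2 * k + c1"
proof -
  define s where "s = csqrt (c2^2 + 4*c1)"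
  have s: "s * s = c2 * c2 + 4 * c1" using power2_csqrt[of "c2^2 + 4*c1"] unfolding s_def
    by (simp add: power2_eq_square)
  define k where "k = (c2 + s) / 2"
  have "k * k = c2 * k + c1" unfolding k_def using s
    by (simp add: field_simps)
  then show ?thesis by blast
qed

lemma case2:
  assumes A: "clin A" and B: "clin B" and H: "HH A B"
    and n1: "\<not> (\<exists>k. A y = k *\<^sub>C y)" and h2: "A (A y) = c1 *\<^sub>C y + c2 *\<^sub>C A y"
  shows "\<exists>l. B y = l *\<^sub>C A y"
proof -
  obtain \<kappa> where kk: "\<kappa> * \<kappa> = c2 * \<kappa> + c1" using quad_root by blast
  define v where "v = A y - (c2 - \<kappa>) *\<^sub>C y"
  have Ay': "A y = (c2 - \<kappa>) *\<^sub>C y + 1 *\<^sub>C v" unfolding v_def by simp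
  have Av: "A v = \<kappa> *\<^sub>C v"
  proof -
    have "A v = c1 *\<^sub>C y + c2 *\<^sub>C A y - (c2 - \<kappa>) *\<^sub>C A y"
      unfolding v_def by (simp add: clin_simps[OF A] h2)
    also have "\<dots> = c1 *\<^sub>C y + \<kappa> *\<^sub>C A y"
      by (simp add: C.scale_left_diff_distrib algebra_simps)
    also have "c1 = - (\<kappa> * (c2 - \<kappa>))" using kk by (simp add: algebra_simps)
    also have "- (\<kappa> * (c2 - \<kappa>)) *\<^sub>C y + \<kappa> *\<^sub>C A y = \<kappa> *\<^sub>C v"
      unfolding v_def by (simp add: C.scale_right_diff_distrib scaleC_scaleC C.scale_minus_left algebra_simps)
    finally show ?thesis .
  qed
  have v0: "v \<noteq> 0"
  proof
    assume "v = 0"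
    then have "A y = (c2 - \<kappa>) *\<^sub>C y" unfolding v_def by simp
    then show False using n1 by blast
  qed
  have ny: "\<not> (\<exists>a. y = a *\<^sub>C v)"
  proof
    assume "\<exists>a. y = a *\<^sub>C v"
    then obtain a where ya: "y = a *\<^sub>C v" by blast
    show False
    proof (cases "a = 0")
      case True
      then have "y = 0" using ya by simp
      then have "A y = 0 *\<^sub>C y" by (simp add: clin_simps[OF A])
      then show False using n1 by blast
    next
      case False
      have "y = a *\<^sub>C A y - (a * (c2 - \<kappa>)) *\<^sub>C y"
        using ya unfolding v_def by (simp add: C.scale_right_diff_distrib scaleC_scaleC)
      then have "a *\<^sub>C A y = (1 + a * (c2 - \<kappa>)) *\<^sub>C y"
        by (simp add: scaleC_add_left algebra_simps)
      then have "(1/a) *\<^sub>C (a *\<^sub>C A y) = (1/a) *\<^sub>C ((1 + a * (c2 - \<kappa>)) *\<^sub>C y)" by simp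
      then have "A y = ((1 + a * (c2 - \<kappa>)) / a) *\<^sub>C y" using False by (simp add: scaleC_scaleC)
      then show False using n1 by blast
    qed
  qed
  obtain f where f: "bounded_cfunctional f" "f y = 1" "f v = 0" using sep1[OF ny] by blast
  obtain p q where pq: "B v = p *\<^sub>C v + q *\<^sub>C A v" using L1[OF A B H, of v] by blast
  have Bv: "B v = (p + q * \<kappa>) *\<^sub>C v" using pq Av by (simp add: scaleC_scaleC scaleC_add_left)
  obtain \<alpha> \<beta> where ab: "B y = \<alpha> *\<^sub>C y + \<beta> *\<^sub>C A y" using L1[OF A B H] by blast
  have By': "B y = (\<alpha> + \<beta> * (c2 - \<kappa>)) *\<^sub>C y + \<beta> *\<^sub>C v"
    using ab unfolding v_def by (simp add: C.scale_right_diff_distrib scaleC_scaleC scaleC_add_left algebra_simps)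
  define aA where "aA = c2 - \<kappa>"
  define aB where "aB = \<alpha> + \<beta> * (c2 - \<kappa>)"
  have GA: "(aA \<noteq> 0 \<longrightarrow> (2*aA) *\<^sub>C y + 1 *\<^sub>C v \<in> analytic_core (SS A f y))
       \<and> (aA = 0 \<longrightarrow> analytic_core (SS A f y) \<subseteq> {0})
       \<and> (\<forall>x\<in>analytic_core (SS A f y). \<exists>p. x = p *\<^sub>C ((2*aA) *\<^sub>C y + 1 *\<^sub>C v))"
    unfolding aA_def by (rule Glem[OF A f Av Ay'])
  have GB: "(aB \<noteq> 0 \<longrightarrow> (2*aB) *\<^sub>C y + \<beta> *\<^sub>C v \<in> analytic_core (SS B f y))
       \<and> (aB = 0 \<longrightarrow> analytic_core (SS B f y) \<subseteq> {0})
       \<and> (\<forall>x\<in>analytic_core (SS B f y). \<exists>p. x = p *\<^sub>C ((2*aB) *\<^sub>C y + \<beta> *\<^sub>C v))"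
    unfolding aB_def by (rule Glem[OF B f Bv By'])
  have KK: "analytic_core (SS A f y) = analytic_core (SS B f y)" using H f(1) unfolding HH_def by blast
  have fl: "f (r *\<^sub>C y + s *\<^sub>C v) = r" for r s using f by (simp add: bcf_lin)
  show ?thesis
  proof (cases "aA = 0")
    case True
    have "aB = 0"
    proof (rule ccontr)
      assume "aB \<noteq> 0"
      then have "(2*aB) *\<^sub>C y + \<beta> *\<^sub>C v = 0" using GA GB KK True by blast
      then have "f ((2*aB) *\<^sub>C y + \<beta> *\<^sub>C v) = 0" using f by (simp add: bcf_lin)
      then show False using fl \<open>aB \<noteq> 0\<close> by simp
    qed
    then have "B y = \<beta> *\<^sub>C A y" using By' Ay' True unfolding aA_def aB_def by simp
    then show ?thesis by blast
  next
    case False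
    then have "(2*aA) *\<^sub>C y + 1 *\<^sub>C v \<in> analytic_core (SS B f y)" using GA KK by blast
    then obtain r where r: "(2*aA) *\<^sub>C y + 1 *\<^sub>C v = r *\<^sub>C ((2*aB) *\<^sub>C y + \<beta> *\<^sub>C v)"
      using GB by blast
    then have r': "(2*aA) *\<^sub>C y + 1 *\<^sub>C v = (r*(2*aB)) *\<^sub>C y + (r*\<beta>) *\<^sub>C v"
      by (simp add: scaleC_add_right scaleC_scaleC)
    have e1: "2*aA = r*(2*aB)"
      using fl[of "2*aA" 1] fl[of "r*(2*aB)" "r*\<beta>"] r' by metis
    have "1 *\<^sub>C v = (r*\<beta>) *\<^sub>C v" using r' e1 by simp
    then have "(1 - r*\<beta>) *\<^sub>C v = 0" by (simp add: C.scale_left_diff_distrib)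
    then have rb: "r*\<beta> = 1" using v0 scaleC_eq_0D by fastforce
    then have r0: "r \<noteq> 0" by auto
    have "r *\<^sub>C B y = A y"
    proof -
      have "r *\<^sub>C B y = (r*aB) *\<^sub>C y + (r*\<beta>) *\<^sub>C v"
        using By' unfolding aB_def by (simp add: scaleC_add_right scaleC_scaleC)
      also have "r*aB = aA" using e1 by simp
      finally show ?thesis using Ay' rb unfolding aA_def by simp
    qed
    then have "(1/r) *\<^sub>C (r *\<^sub>C B y) = (1/r) *\<^sub>C A y" by simp
    then have "B y = (1/r) *\<^sub>C A y" using r0 by (simp add: scaleC_scaleC)
    then show ?thesis by blast
  qed
qed


lemma case1:
  assumes A: "clin A" and B: "clin B" and H: "HH A B" and k: "A y = k *\<^sub>C y"
  shows "\<exists>l. B y = l *\<^sub>C A y"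
proof -
  obtain \<alpha> \<beta> where ab: "B y = \<alpha> *\<^sub>C y + \<beta> *\<^sub>C A y" using L1[OF A B H] by blast
  show ?thesis
  proof (cases "k = 0")
    case False
    have "B y = (\<alpha> + \<beta> * k) *\<^sub>C y" using ab k by (simp add: scaleC_scaleC scaleC_add_left)
    also have "\<dots> = ((\<alpha> + \<beta> * k) / k) *\<^sub>C A y" using k False by (simp add: scaleC_scaleC)
    finally show ?thesis by blast
  next
    case True
    then have Ay: "A y = 0" using k by simp
    show ?thesis
    proof (cases "y = 0")
      case True
      then show ?thesis by (intro exI[of _ 0]) (simp add: clin_simps[OF B])
    next
      case False
      obtain f where f: "bounded_cfunctional f" "f y = 1" using sep0[OF False] by blast
      have KA: "analytic_core (SS A f y) \<subseteq> {0}"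
        by (rule NIL1[OF A f(1)]) (simp_all add: Ay clin_simps[OF A] bcf_lin[OF f(1)])
      have By: "B y = \<alpha> *\<^sub>C y" using ab Ay by simp
      have "SS B f y y = (2*\<alpha>) *\<^sub>C y" unfolding SS_def using f By
        by (simp add: bcf_lin scaleC_times2)
      have "\<alpha> = 0"
      proof (rule ccontr)
        assume a: "\<alpha> \<noteq> 0"
        have "y \<in> analytic_core (SS B f y)"
          using K_eig[of "SS B f y" y "2*\<alpha>"] \<open>SS B f y y = (2*\<alpha>) *\<^sub>C y\<close> a SS_scale[OF B f(1)] by auto
        then show False using H f(1) KA False unfolding HH_def by blast
      qed
      then show ?thesis using By by (intro exI[of _ 0]) (simp add: Ay)
    qed
  qed
qed

lemma local_dep:
  assumes A: "clin A" and B: "clin B" and H: "HH A B"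
  shows "\<exists>l. B y = l *\<^sub>C A y"
proof (cases "\<exists>k. A y = k *\<^sub>C y")
  case True then show ?thesis using case1[OF A B H] by blast
next
  case n1: False
  show ?thesis
  proof (cases "\<exists>c1 c2. A (A y) = c1 *\<^sub>C y + c2 *\<^sub>C A y")
    case True then show ?thesis using case2[OF A B H n1] by blast
  next
    case False then show ?thesis using case3[OF A B H n1] by blast
  qed
qed

lemma glob:
  assumes A: "clin A" and B: "clin B" and P: "\<And>y. \<exists>l. B y = l *\<^sub>C A y"
  shows "\<exists>l. \<forall>y. B y = l *\<^sub>C A y"
proof (cases "\<forall>y. A y = 0")
  case True
  then show ?thesis using P by (intro exI[of _ 0]) (metis C.scale_zero_right)
next
  case False
  then obtain y0 where y0: "A y0 \<noteq> 0" by blast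
  obtain l0 where l0: "B y0 = l0 *\<^sub>C A y0" using P by blast
  have "B y = l0 *\<^sub>C A y" for y
  proof (cases "\<exists>k. A y = k *\<^sub>C A y0")
    case True
    then obtain k where k: "A y = k *\<^sub>C A y0" by blast
    have "A (y - k *\<^sub>C y0) = 0" using k by (simp add: clin_simps[OF A])
    moreover obtain l where "B (y - k *\<^sub>C y0) = l *\<^sub>C A (y - k *\<^sub>C y0)" using P by blast
    ultimately have "B (y - k *\<^sub>C y0) = 0" by simp
    then have "B y = k *\<^sub>C B y0" by (simp add: clin_simps[OF B])
    also have "\<dots> = l0 *\<^sub>C A y" using l0 k by (simp add: scaleC_scaleC mult.commute)
    finally show ?thesis .
  next
    case False
    obtain l1 where l1: "B y = l1 *\<^sub>C A y" using P by blast
    obtain l2 where l2: "B (y + y0) = l2 *\<^sub>C A (y + y0)" using P by blast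
    have e: "l1 *\<^sub>C A y + l0 *\<^sub>C A y0 = l2 *\<^sub>C A y + l2 *\<^sub>C A y0"
      using l1 l2 l0 by (simp add: clin_simps[OF A] clin_simps[OF B] scaleC_add_right)
    have "l1 = l2"
    proof (rule ccontr)
      assume ne: "l1 \<noteq> l2"
      have "(l1 - l2) *\<^sub>C A y = (l2 - l0) *\<^sub>C A y0"
        using e by (simp add: C.scale_left_diff_distrib algebra_simps)
      then have "(1/(l1 - l2)) *\<^sub>C ((l1 - l2) *\<^sub>C A y) = (1/(l1 - l2)) *\<^sub>C ((l2 - l0) *\<^sub>C A y0)" by simp
      then have "A y = ((l2 - l0)/(l1 - l2)) *\<^sub>C A y0" using ne by (simp add: scaleC_scaleC)
      then show False using False by blast
    qed
    then have "(l2 - l0) *\<^sub>C A y0 = 0" using e by (simp add: C.scale_left_diff_distrib)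
    then have "l2 = l0" using y0 scaleC_eq_0D by fastforce
    then show ?thesis using l1 \<open>l1 = l2\<close> by simp
  qed
  then show ?thesis by blast
qed


lemma rank1_bco:
  assumes "F \<in> rank_le_one_ops"
  shows "bounded_clinear_op F"
proof -
  obtain x f where F: "F = (\<lambda>z. f z *\<^sub>C x)" and f: "bounded_cfunctional f"
    using assms unfolding rank_le_one_ops_def by blast
  interpret f: bounded_linear f using f unfolding bounded_cfunctional_def by simp
  obtain K where K: "\<And>z. norm (f z) \<le> norm z * K" using f.bounded by blast
  have "bounded_linear (\<lambda>z. f z *\<^sub>C x)"
  proof (rule bounded_linear_intro)
    show "f (a + b) *\<^sub>C x = f a *\<^sub>C x + f b *\<^sub>C x" for a b by (simp add: f.add scaleC_add_left)
    show "f (r *\<^sub>R a) *\<^sub>C x = r *\<^sub>R (f a *\<^sub>C x)" for r a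
      by (simp only: f.scale) (simp add: scaleR_scaleC scaleC_scaleC scaleR_conv_of_real)
    show "norm (f a *\<^sub>C x) \<le> norm a * (K * norm x)" for a
      using K[of a] by (simp add: norm_scaleC mult.assoc[symmetric] mult_right_mono)
  qed
  moreover have "\<forall>c z. f (c *\<^sub>C z) *\<^sub>C x = c *\<^sub>C (f z *\<^sub>C x)"
    using f by (simp add: bcf_lin scaleC_scaleC)
  ultimately show ?thesis unfolding bounded_clinear_op_def F by simp
qed

lemma K_scale_eq:
  fixes S :: "'a::complex_banach \<Rightarrow> 'a"
  assumes lin: "\<And>a z. S (a *\<^sub>C z) = a *\<^sub>C S z" and c: "c \<noteq> 0"
  shows "analytic_core (\<lambda>x. c *\<^sub>C S x) = analytic_core S"
proof
  show "analytic_core S \<subseteq> analytic_core (\<lambda>x. c *\<^sub>C S x)" by (rule K_scale[OF lin c])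
  have "analytic_core (\<lambda>x. c *\<^sub>C S x) \<subseteq> analytic_core (\<lambda>x. (1/c) *\<^sub>C (c *\<^sub>C S x))"
    by (rule K_scale) (simp_all add: lin scaleC_scaleC mult.commute c)
  also have "(\<lambda>x. (1/c) *\<^sub>C (c *\<^sub>C S x)) = S" using c by (simp add: scaleC_scaleC)
  finally show "analytic_core (\<lambda>x. c *\<^sub>C S x) \<subseteq> analytic_core S" .
qed

lemma SS_eq: fixes T :: "'a::complex_banach \<Rightarrow> 'a" and y :: 'a shows "clin T \<Longrightarrow> (\<lambda>x. T (f x *\<^sub>C y) + f (T x) *\<^sub>C y) = SS T f y"
  unfolding SS_def by (simp add: clin_simps)

theorem lemma2p4:
  fixes A B :: "'a::complex_banach \<Rightarrow> 'a"
  assumes "infinite_dimensional_C TYPE('a)"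
    and "bounded_clinear_op A" and "bounded_clinear_op B"
  shows "((\<forall>T. bounded_clinear_op T \<longrightarrow>
             analytic_core (\<lambda>x. A (T x) + T (A x)) = analytic_core (\<lambda>x. B (T x) + T (B x)))
          \<longleftrightarrow> (\<forall>F\<in>rank_le_one_ops.
             analytic_core (\<lambda>x. A (F x) + F (A x)) = analytic_core (\<lambda>x. B (F x) + F (B x))))
       \<and> ((\<forall>F\<in>rank_le_one_ops.
             analytic_core (\<lambda>x. A (F x) + F (A x)) = analytic_core (\<lambda>x. B (F x) + F (B x)))
          \<longleftrightarrow> (\<exists>c::complex. c \<noteq> 0 \<and> B = (\<lambda>x. c *\<^sub>C A x)))"
proof -
  have cA: "clin A" and cB: "clin B" using assms(2,3) bco_clin by auto
  let ?i = "\<forall>T. bounded_clinear_op T \<longrightarrow>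
             analytic_core (\<lambda>x. A (T x) + T (A x)) = analytic_core (\<lambda>x. B (T x) + T (B x))"
  let ?ii = "\<forall>F\<in>rank_le_one_ops.
             analytic_core (\<lambda>x. A (F x) + F (A x)) = analytic_core (\<lambda>x. B (F x) + F (B x))"
  let ?iii = "\<exists>c::complex. c \<noteq> 0 \<and> B = (\<lambda>x. c *\<^sub>C A x)"
  have i_ii: "?i \<Longrightarrow> ?ii" using rank1_bco by blast
  have iii_i: "?iii \<Longrightarrow> ?i"
  proof (intro allI impI)
    fix T :: "'a \<Rightarrow> 'a" assume iii: ?iii and T: "bounded_clinear_op T"
    have cT: "clin T" using T bco_clin by blast
    obtain c where c: "c \<noteq> 0" "B = (\<lambda>x. c *\<^sub>C A x)" using iii by blast
    have "(\<lambda>x. B (T x) + T (B x)) = (\<lambda>x. c *\<^sub>C (A (T x) + T (A x)))"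
      using c by (simp add: clin_simps[OF cT] scaleC_add_right)
    moreover have "analytic_core (\<lambda>x. c *\<^sub>C (A (T x) + T (A x))) = analytic_core (\<lambda>x. A (T x) + T (A x))"
      by (rule K_scale_eq[OF _ c(1)]) (simp add: clin_simps[OF cT] clin_simps[OF cA] scaleC_add_right)
    ultimately show "analytic_core (\<lambda>x. A (T x) + T (A x)) = analytic_core (\<lambda>x. B (T x) + T (B x))"
      by simp
  qed
  have ii_iii: "?ii \<Longrightarrow> ?iii"
  proof -
    assume ii: ?ii
    have HAB: "HH A B" unfolding HH_def
    proof (intro allI impI)
      fix y :: 'a and f :: "'a \<Rightarrow> complex" assume f: "bounded_cfunctional f"
      have "(\<lambda>z. f z *\<^sub>C y) \<in> rank_le_one_ops" unfolding rank_le_one_ops_def using f by blast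
      then have "analytic_core (\<lambda>x. A (f x *\<^sub>C y) + f (A x) *\<^sub>C y) =
                 analytic_core (\<lambda>x. B (f x *\<^sub>C y) + f (B x) *\<^sub>C y)" using ii by fastforce
      then show "analytic_core (SS A f y) = analytic_core (SS B f y)" by (simp add: SS_eq cA cB)
    qed
    then have HBA: "HH B A" unfolding HH_def by simp
    obtain l where l: "\<And>y. B y = l *\<^sub>C A y"
      using glob[OF cA cB local_dep[OF cA cB HAB]] by blast
    show ?iii
    proof (cases "l = 0")
      case False
      then show ?thesis using l by (intro exI[of _ l]) auto
    next
      case True
      then have B0: "B y = 0" for y using l by simp
      have "A y = 0" for y using local_dep[OF cB cA HBA, of y] B0 by auto
      then show ?thesis using B0 by (intro exI[of _ 1]) auto
    qed
  qed
  show ?thesis using i_ii ii_iii iii_i by blast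
qed

end
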